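(* Let $L_1$ be a finite-dimensional non-nilpotent Lie algebra over a field $F$. For every finite-dimensional nilpotent Lie algebra $L$ over $F$, the number of connected components of $\Gamma_{\mathfrak{N}}(L_1\oplus L)$ equals the number of connected components of $\Gamma_{\mathfrak{N}}(L_1)$. In particular, $\Gamma_{\mathfrak{N}}(L_1)$ is connected if and only if $\Gamma_{\mathfrak{N}}(L_1\oplus L)$ is connected for every finite-dimensional nilpotent Lie algebra $L$.
   Context: $\langle a,b\rangle$ denotes the Lie subalgebra generated by $a,b$, and $\mathrm{nil}(L)=\{x\in L\mid \langle h,x\rangle \text{ is nilpotent for all } h\in L\}$. For a finite-dimensional non-nilpotent Lie algebra $L$, the nilpotent graph $\Gamma_{\mathfrak{N}}(L)$ is the simple undirected graph with vertex set $L\setminus\mathrm{nil}(L)$ in which distinct vertices $x,y$ are adjacent iff $\langle x,y\rangle$ is nilpotent. $L_1\oplus L$ is the direct sum of Lie algebras with componentwise bracket. *)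

theory Defs
  imports Main "HOL.Vector_Spaces" "HOL-Library.Product_Plus"
begin

text \<open>A Lie algebra over a field 'k, carried by the whole type 'v, with scalar
multiplication sc and bracket br.\<close>

definition lie_algebra :: "('k::field \<Rightarrow> 'v::ab_group_add \<Rightarrow> 'v) \<Rightarrow> ('v \<Rightarrow> 'v \<Rightarrow> 'v) \<Rightarrow> bool" where
  "lie_algebra sc br \<longleftrightarrow> vector_space sc
     \<and> (\<forall>x y z. br (x + y) z = br x z + br y z)
     \<and> (\<forall>x y z. br x (y + z) = br x y + br x z)
     \<and> (\<forall>c x y. br (sc c x) y = sc c (br x y))
     \<and> (\<forall>c x y. br x (sc c y) = sc c (br x y))
     \<and> (\<forall>x. br x x = 0)
     \<and> (\<forall>x y z. br x (br y z) + br y (br z x) + br z (br x y) = 0)"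

definition fin_dim_lie_algebra :: "('k::field \<Rightarrow> 'v::ab_group_add \<Rightarrow> 'v) \<Rightarrow> ('v \<Rightarrow> 'v \<Rightarrow> 'v) \<Rightarrow> bool" where
  "fin_dim_lie_algebra sc br \<longleftrightarrow> lie_algebra sc br
     \<and> (\<exists>B. finite B \<and> module.span sc B = UNIV)"

definition lie_subalgebra :: "('k::field \<Rightarrow> 'v::ab_group_add \<Rightarrow> 'v) \<Rightarrow> ('v \<Rightarrow> 'v \<Rightarrow> 'v) \<Rightarrow> 'v set \<Rightarrow> bool" where
  "lie_subalgebra sc br S \<longleftrightarrow> module.subspace sc S \<and> (\<forall>x\<in>S. \<forall>y\<in>S. br x y \<in> S)"

definition gen2 :: "('k::field \<Rightarrow> 'v::ab_group_add \<Rightarrow> 'v) \<Rightarrow> ('v \<Rightarrow> 'v \<Rightarrow> 'v) \<Rightarrow> 'v \<Rightarrow> 'v \<Rightarrow> 'v set" where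
  "gen2 sc br a b = \<Inter> {S. lie_subalgebra sc br S \<and> a \<in> S \<and> b \<in> S}"

fun lcs :: "('k::field \<Rightarrow> 'v::ab_group_add \<Rightarrow> 'v) \<Rightarrow> ('v \<Rightarrow> 'v \<Rightarrow> 'v) \<Rightarrow> 'v set \<Rightarrow> nat \<Rightarrow> 'v set" where
  "lcs sc br S 0 = S"
| "lcs sc br S (Suc n) = module.span sc {br x y | x y. x \<in> S \<and> y \<in> lcs sc br S n}"

definition nilpotent_sub :: "('k::field \<Rightarrow> 'v::ab_group_add \<Rightarrow> 'v) \<Rightarrow> ('v \<Rightarrow> 'v \<Rightarrow> 'v) \<Rightarrow> 'v set \<Rightarrow> bool" where
  "nilpotent_sub sc br S \<longleftrightarrow> (\<exists>n. lcs sc br S n \<subseteq> {0})"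

definition nilpotent_lie :: "('k::field \<Rightarrow> 'v::ab_group_add \<Rightarrow> 'v) \<Rightarrow> ('v \<Rightarrow> 'v \<Rightarrow> 'v) \<Rightarrow> bool" where
  "nilpotent_lie sc br \<longleftrightarrow> nilpotent_sub sc br UNIV"

definition nil_set :: "('k::field \<Rightarrow> 'v::ab_group_add \<Rightarrow> 'v) \<Rightarrow> ('v \<Rightarrow> 'v \<Rightarrow> 'v) \<Rightarrow> 'v set" where
  "nil_set sc br = {x. \<forall>h. nilpotent_sub sc br (gen2 sc br h x)}"

definition nil_vertices :: "('k::field \<Rightarrow> 'v::ab_group_add \<Rightarrow> 'v) \<Rightarrow> ('v \<Rightarrow> 'v \<Rightarrow> 'v) \<Rightarrow> 'v set" where
  "nil_vertices sc br = UNIV - nil_set sc br"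

definition nil_edges :: "('k::field \<Rightarrow> 'v::ab_group_add \<Rightarrow> 'v) \<Rightarrow> ('v \<Rightarrow> 'v \<Rightarrow> 'v) \<Rightarrow> ('v \<times> 'v) set" where
  "nil_edges sc br = {(x, y). x \<in> nil_vertices sc br \<and> y \<in> nil_vertices sc br \<and> x \<noteq> y
                         \<and> nilpotent_sub sc br (gen2 sc br x y)}"

definition nil_components :: "('k::field \<Rightarrow> 'v::ab_group_add \<Rightarrow> 'v) \<Rightarrow> ('v \<Rightarrow> 'v \<Rightarrow> 'v) \<Rightarrow> 'v set set" where
  "nil_components sc br = (\<lambda>x. (nil_edges sc br)\<^sup>* `` {x}) ` nil_vertices sc br"

definition nil_graph_connected :: "('k::field \<Rightarrow> 'v::ab_group_add \<Rightarrow> 'v) \<Rightarrow> ('v \<Rightarrow> 'v \<Rightarrow> 'v) \<Rightarrow> bool" where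
  "nil_graph_connected sc br \<longleftrightarrow> nil_vertices sc br \<noteq> {}
     \<and> (\<forall>x\<in>nil_vertices sc br. \<forall>y\<in>nil_vertices sc br. (x, y) \<in> (nil_edges sc br)\<^sup>*)"

definition sum_scale :: "('k \<Rightarrow> 'v \<Rightarrow> 'v) \<Rightarrow> ('k \<Rightarrow> 'w \<Rightarrow> 'w) \<Rightarrow> 'k \<Rightarrow> 'v \<times> 'w \<Rightarrow> 'v \<times> 'w" where
  "sum_scale s1 s2 c p = (s1 c (fst p), s2 c (snd p))"

definition sum_bracket :: "('v \<Rightarrow> 'v \<Rightarrow> 'v) \<Rightarrow> ('w \<Rightarrow> 'w \<Rightarrow> 'w) \<Rightarrow> 'v \<times> 'w \<Rightarrow> 'v \<times> 'w \<Rightarrow> 'v \<times> 'w" where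
  "sum_bracket b1 b2 p q = (b1 (fst p) (fst q), b2 (snd p) (snd q))"

end

theory Submission imports Defs begin

lemma lie_mod: "lie_algebra s b \<Longrightarrow> module s"
  by (simp add: lie_algebra_def module_iff_vector_space)

lemma lie_br0: assumes "lie_algebra s b" shows "b x 0 = 0" "b 0 x = 0"
proof -
  have d1: "\<forall>x y z. b x (y + z) = b x y + b x z"
    using assms unfolding lie_algebra_def by (elim conjE) assumption
  have d2: "\<forall>x y z. b (x + y) z = b x z + b y z"
    using assms unfolding lie_algebra_def by (elim conjE) assumption
  have "b x (0+0) = b x 0 + b x 0" using d1 by (rule allE) (erule allE, erule allE)
  then show "b x 0 = 0" by simp
  have "b (0+0) x = b 0 x + b 0 x" using d2 by (rule allE) (erule allE, erule allE)
  then show "b 0 x = 0" by simp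
qed

lemma sum_module:
  assumes "module s1" "module s2"
  shows "module (sum_scale s1 s2)"
  using assms unfolding module_def sum_scale_def
  by (auto simp: prod_eq_iff)

lemma gen2_sub: "lie_subalgebra s b T \<Longrightarrow> a \<in> T \<Longrightarrow> c \<in> T \<Longrightarrow> gen2 s b a c \<subseteq> T"
  unfolding gen2_def by auto

lemma gen2_mem: "a \<in> gen2 s b a c" "c \<in> gen2 s b a c"
  unfolding gen2_def by auto

lemma gen2_subalg: assumes "module s" shows "lie_subalgebra s b (gen2 s b a c)"
  unfolding lie_subalgebra_def
proof
  show "module.subspace s (gen2 s b a c)" unfolding gen2_def
    by (rule module.subspace_Inter[OF assms]) (auto simp: lie_subalgebra_def)
  show "\<forall>x\<in>gen2 s b a c. \<forall>y\<in>gen2 s b a c. b x y \<in> gen2 s b a c"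
    unfolding gen2_def lie_subalgebra_def by auto
qed

lemma lcs_mono: assumes "module s" "S \<subseteq> T" shows "lcs s b S n \<subseteq> lcs s b T n"
proof (induction n)
  case 0 then show ?case using assms by simp
next
  case (Suc n)
  show ?case unfolding lcs.simps
    by (rule module.span_mono[OF assms(1)]) (use Suc assms(2) in blast)
qed

lemma nilp_subset: "module s \<Longrightarrow> S \<subseteq> T \<Longrightarrow> nilpotent_sub s b T \<Longrightarrow> nilpotent_sub s b S"
  unfolding nilpotent_sub_def using lcs_mono by blast

lemma lcs_zero_up: assumes "lie_algebra s b" "lcs s b S n \<subseteq> {0}" "n \<le> m"
  shows "lcs s b S m \<subseteq> {0}"
  using assms(3)
proof (induction m rule: dec_induct)
  case base then show ?case using assms by simp
next
  case (step m)
  have "{b x y | x y. x \<in> S \<and> y \<in> lcs s b S m} \<subseteq> {0}"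
    using step lie_br0[OF assms(1)] by auto
  then show ?case unfolding lcs.simps
    using module.span_minimal[OF lie_mod[OF assms(1)]] module.subspace_single_0[OF lie_mod[OF assms(1)]]
    by blast
qed

lemma nilp_gen_same: assumes "lie_algebra s b" shows "nilpotent_sub s b (gen2 s b x x)"
proof -
  have m: "module s" using lie_mod[OF assms] .
  have sl: "\<forall>c x y. b (s c x) y = s c (b x y)"
    using assms unfolding lie_algebra_def by (elim conjE) assumption
  have sr: "\<forall>c x y. b x (s c y) = s c (b x y)"
    using assms unfolding lie_algebra_def by (elim conjE) assumption
  have xx: "\<forall>x. b x x = 0"
    using assms unfolding lie_algebra_def by (elim conjE) assumption
  let ?T = "module.span s {x}"
  have brT: "b p q = 0" if "p \<in> ?T" "q \<in> ?T" for p q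
  proof -
    have "p \<in> range (\<lambda>k. s k x)" using that(1) module.span_singleton[OF m] by simp
    then obtain c where c: "p = s c x" by blast
    have "q \<in> range (\<lambda>k. s k x)" using that(2) module.span_singleton[OF m] by simp
    then obtain d where d: "q = s d x" by blast
    have "b (s c x) (s d x) = s c (b x (s d x))" using sl by blast
    also have "\<dots> = s c (s d (b x x))" using sr by simp
    also have "\<dots> = 0" using xx module.scale_zero_right[OF m] by simp
    finally show ?thesis using c d by simp
  qed
  have "lie_subalgebra s b ?T" unfolding lie_subalgebra_def
    using brT module.subspace_span[OF m] module.subspace_0[OF m] by auto
  moreover have "x \<in> ?T" by (rule module.span_base[OF m]) simp
  ultimately have sub: "gen2 s b x x \<subseteq> ?T" using gen2_sub by blast
  have "{b p q | p q. p \<in> ?T \<and> q \<in> lcs s b ?T 0} \<subseteq> {0}" using brT by auto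
  then have "lcs s b ?T 1 \<subseteq> {0}"
    using module.span_minimal[OF m _ module.subspace_single_0[OF m]] by simp
  then have "nilpotent_sub s b ?T" unfolding nilpotent_sub_def by blast
  then show ?thesis using nilp_subset[OF m sub] by blast
qed

lemma subspace_prod:
  assumes "module s1" "module s2" "module.subspace s1 X" "module.subspace s2 Y"
  shows "module.subspace (sum_scale s1 s2) (X \<times> Y)"
  using assms unfolding module.subspace_def[OF assms(1)] module.subspace_def[OF assms(2)]
    module.subspace_def[OF sum_module[OF assms(1,2)]]
  by (auto simp: sum_scale_def zero_prod_def)

lemma fst_hom: assumes "module s1" "module s2" shows "module_hom (sum_scale s1 s2) s1 fst"
  using assms sum_module[OF assms] unfolding module_hom_def module_hom_axioms_def
  by (auto simp: sum_scale_def)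

lemma lcs_prod:
  assumes "module s1" "module s2"
  shows "lcs (sum_scale s1 s2) (sum_bracket b1 b2) (A \<times> UNIV) n
         \<subseteq> lcs s1 b1 A n \<times> lcs s2 b2 UNIV n"
proof (induction n)
  case 0 then show ?case by simp
next
  case (Suc n)
  have "{sum_bracket b1 b2 p q |p q. p \<in> A \<times> UNIV \<and> q \<in> lcs (sum_scale s1 s2) (sum_bracket b1 b2) (A \<times> UNIV) n}
     \<subseteq> lcs s1 b1 A (Suc n) \<times> lcs s2 b2 UNIV (Suc n)"
  proof
    fix z assume "z \<in> {sum_bracket b1 b2 p q |p q. p \<in> A \<times> UNIV \<and> q \<in> lcs (sum_scale s1 s2) (sum_bracket b1 b2) (A \<times> UNIV) n}"
    then obtain p q where z: "z = sum_bracket b1 b2 p q" and p: "p \<in> A \<times> UNIV"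
      and q: "q \<in> lcs (sum_scale s1 s2) (sum_bracket b1 b2) (A \<times> UNIV) n" by blast
    from q Suc have q1: "fst q \<in> lcs s1 b1 A n" and q2: "snd q \<in> lcs s2 b2 UNIV n" by auto
    have "b1 (fst p) (fst q) \<in> lcs s1 b1 A (Suc n)"
      unfolding lcs.simps using p q1 by (intro module.span_base[OF assms(1)]) (auto simp: mem_Times_iff)
    moreover have "b2 (snd p) (snd q) \<in> lcs s2 b2 UNIV (Suc n)"
      unfolding lcs.simps using q2 by (intro module.span_base[OF assms(2)]) blast
    ultimately show "z \<in> lcs s1 b1 A (Suc n) \<times> lcs s2 b2 UNIV (Suc n)"
      using z by (simp add: sum_bracket_def)
  qed
  moreover have "module.subspace (sum_scale s1 s2) (lcs s1 b1 A (Suc n) \<times> lcs s2 b2 UNIV (Suc n))"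
    unfolding lcs.simps
    by (rule subspace_prod[OF assms module.subspace_span[OF assms(1)] module.subspace_span[OF assms(2)]])
  ultimately show ?case
    by (subst lcs.simps) (rule module.span_minimal[OF sum_module[OF assms]])
qed

lemma lcs_fst:
  assumes "module s1" "module s2"
  shows "lcs s1 b1 (fst ` G) n \<subseteq> fst ` lcs (sum_scale s1 s2) (sum_bracket b1 b2) G n"
proof (induction n)
  case 0 then show ?case by simp
next
  case (Suc n)
  have "{b1 a c |a c. a \<in> fst ` G \<and> c \<in> lcs s1 b1 (fst ` G) n}
     \<subseteq> fst ` {sum_bracket b1 b2 p q |p q. p \<in> G \<and> q \<in> lcs (sum_scale s1 s2) (sum_bracket b1 b2) G n}"
  proof
    fix z assume "z \<in> {b1 a c |a c. a \<in> fst ` G \<and> c \<in> lcs s1 b1 (fst ` G) n}"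
    then obtain a c where z: "z = b1 a c" and a: "a \<in> fst ` G" and c: "c \<in> lcs s1 b1 (fst ` G) n" by blast
    from a obtain p where p: "p \<in> G" "a = fst p" by blast
    from c Suc obtain q where q: "q \<in> lcs (sum_scale s1 s2) (sum_bracket b1 b2) G n" "c = fst q" by blast
    show "z \<in> fst ` {sum_bracket b1 b2 p q |p q. p \<in> G \<and> q \<in> lcs (sum_scale s1 s2) (sum_bracket b1 b2) G n}"
    proof (rule image_eqI)
      show "z = fst (sum_bracket b1 b2 p q)" using z p q by (simp add: sum_bracket_def)
      show "sum_bracket b1 b2 p q \<in> {sum_bracket b1 b2 p q |p q. p \<in> G \<and> q \<in> lcs (sum_scale s1 s2) (sum_bracket b1 b2) G n}"
        using p q by blast
    qed
  qed
  then have "lcs s1 b1 (fst ` G) (Suc n) \<subseteq> module.span s1 (fst ` {sum_bracket b1 b2 p q |p q. p \<in> G \<and> q \<in> lcs (sum_scale s1 s2) (sum_bracket b1 b2) G n})"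
    unfolding lcs.simps by (rule module.span_mono[OF assms(1)])
  also have "\<dots> = fst ` lcs (sum_scale s1 s2) (sum_bracket b1 b2) G (Suc n)"
    unfolding lcs.simps by (rule module_hom.span_image[OF fst_hom[OF assms]])
  finally show ?case .
qed

lemma key:
  assumes l1: "lie_algebra s1 b1" and l2: "lie_algebra s2 b2" and n2: "nilpotent_lie s2 b2"
  shows "nilpotent_sub (sum_scale s1 s2) (sum_bracket b1 b2) (gen2 (sum_scale s1 s2) (sum_bracket b1 b2) (x,u) (y,v))
     \<longleftrightarrow> nilpotent_sub s1 b1 (gen2 s1 b1 x y)"
proof -
  have m1: "module s1" and m2: "module s2" using l1 l2 by (auto intro: lie_mod)
  have mS: "module (sum_scale s1 s2)" using sum_module[OF m1 m2] .
  let ?G = "gen2 (sum_scale s1 s2) (sum_bracket b1 b2) (x,u) (y,v)"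
  let ?A = "gen2 s1 b1 x y"
  have sG: "lie_subalgebra (sum_scale s1 s2) (sum_bracket b1 b2) ?G" by (rule gen2_subalg[OF mS])
  have sA: "lie_subalgebra s1 b1 ?A" by (rule gen2_subalg[OF m1])
  show ?thesis
  proof
    assume nG: "nilpotent_sub (sum_scale s1 s2) (sum_bracket b1 b2) ?G"
    have "lie_subalgebra s1 b1 (fst ` ?G)" unfolding lie_subalgebra_def
    proof
      show "module.subspace s1 (fst ` ?G)"
        using sG module_hom.subspace_image[OF fst_hom[OF m1 m2]] unfolding lie_subalgebra_def by blast
      show "\<forall>a\<in>fst ` ?G. \<forall>c\<in>fst ` ?G. b1 a c \<in> fst ` ?G"
      proof (intro ballI)
        fix a c assume "a \<in> fst ` ?G" "c \<in> fst ` ?G"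
        then obtain p q where "p \<in> ?G" "q \<in> ?G" "a = fst p" "c = fst q" by blast
        moreover then have "sum_bracket b1 b2 p q \<in> ?G" using sG unfolding lie_subalgebra_def by blast
        ultimately show "b1 a c \<in> fst ` ?G" by (force simp: sum_bracket_def)
      qed
    qed
    moreover have "x \<in> fst ` ?G" "y \<in> fst ` ?G" using gen2_mem by force+
    ultimately have sub: "?A \<subseteq> fst ` ?G" by (rule gen2_sub)
    from nG obtain n where n: "lcs (sum_scale s1 s2) (sum_bracket b1 b2) ?G n \<subseteq> {0}"
      unfolding nilpotent_sub_def by blast
    have "lcs s1 b1 (fst ` ?G) n \<subseteq> {0}" using lcs_fst[OF m1 m2, of b1 ?G n b2] n by force
    then have "nilpotent_sub s1 b1 (fst ` ?G)" unfolding nilpotent_sub_def by blast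
    then show "nilpotent_sub s1 b1 ?A" by (rule nilp_subset[OF m1 sub])
  next
    assume nA: "nilpotent_sub s1 b1 ?A"
    have "lie_subalgebra (sum_scale s1 s2) (sum_bracket b1 b2) (?A \<times> UNIV)"
      unfolding lie_subalgebra_def
    proof
      show "module.subspace (sum_scale s1 s2) (?A \<times> UNIV)"
        using subspace_prod[OF m1 m2 _ module.subspace_UNIV[OF m2]] sA unfolding lie_subalgebra_def by blast
      show "\<forall>p\<in>?A \<times> UNIV. \<forall>q\<in>?A \<times> UNIV. sum_bracket b1 b2 p q \<in> ?A \<times> UNIV"
        using sA unfolding lie_subalgebra_def by (auto simp: sum_bracket_def)
    qed
    moreover have "(x,u) \<in> ?A \<times> UNIV" "(y,v) \<in> ?A \<times> UNIV" using gen2_mem by auto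
    ultimately have sub: "?G \<subseteq> ?A \<times> UNIV" by (rule gen2_sub)
    from nA obtain k1 where k1: "lcs s1 b1 ?A k1 \<subseteq> {0}" unfolding nilpotent_sub_def by blast
    from n2 obtain k2 where k2: "lcs s2 b2 UNIV k2 \<subseteq> {0}" unfolding nilpotent_lie_def nilpotent_sub_def by blast
    have "lcs s1 b1 ?A (max k1 k2) \<subseteq> {0}" by (rule lcs_zero_up[OF l1 k1]) simp
    moreover have "lcs s2 b2 UNIV (max k1 k2) \<subseteq> {0}" by (rule lcs_zero_up[OF l2 k2]) simp
    ultimately have "lcs (sum_scale s1 s2) (sum_bracket b1 b2) (?A \<times> UNIV) (max k1 k2) \<subseteq> {0}"
      using lcs_prod[OF m1 m2, of b1 b2 ?A "max k1 k2"] by (auto simp: zero_prod_def)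
    then have "nilpotent_sub (sum_scale s1 s2) (sum_bracket b1 b2) (?A \<times> UNIV)"
      unfolding nilpotent_sub_def by blast
    then show "nilpotent_sub (sum_scale s1 s2) (sum_bracket b1 b2) ?G" by (rule nilp_subset[OF mS sub])
  qed
qed


context
  fixes s1 :: "'k::field \<Rightarrow> 'v::ab_group_add \<Rightarrow> 'v" and b1 :: "'v \<Rightarrow> 'v \<Rightarrow> 'v"
    and s2 :: "'k \<Rightarrow> 'w::ab_group_add \<Rightarrow> 'w" and b2 :: "'w \<Rightarrow> 'w \<Rightarrow> 'w"
  assumes l1: "lie_algebra s1 b1" and l2: "lie_algebra s2 b2" and n2: "nilpotent_lie s2 b2"
begin

abbreviation "SS \<equiv> sum_scale s1 s2"
abbreviation "BB \<equiv> sum_bracket b1 b2"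

lemma nilset_sum: "p \<in> nil_set SS BB \<longleftrightarrow> fst p \<in> nil_set s1 b1"
proof -
  obtain x u where p: "p = (x,u)" by (cases p)
  have "(\<forall>h. nilpotent_sub SS BB (gen2 SS BB h (x,u))) \<longleftrightarrow> (\<forall>h. nilpotent_sub s1 b1 (gen2 s1 b1 h x))"
  proof
    assume H: "\<forall>h. nilpotent_sub SS BB (gen2 SS BB h (x,u))"
    show "\<forall>h. nilpotent_sub s1 b1 (gen2 s1 b1 h x)"
    proof
      fix h
      have "nilpotent_sub SS BB (gen2 SS BB (h,u) (x,u))" using H by blast
      then show "nilpotent_sub s1 b1 (gen2 s1 b1 h x)" using key[OF l1 l2 n2, of h u x u] by simp
    qed
  next
    assume H: "\<forall>h. nilpotent_sub s1 b1 (gen2 s1 b1 h x)"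
    show "\<forall>h. nilpotent_sub SS BB (gen2 SS BB h (x,u))"
    proof
      fix h :: "'v \<times> 'w"
      obtain h1 h2 where h: "h = (h1,h2)" by (cases h)
      show "nilpotent_sub SS BB (gen2 SS BB h (x,u))" unfolding h using H key[OF l1 l2 n2, of h1 h2 x u] by simp
    qed
  qed
  then show ?thesis unfolding nil_set_def p by simp
qed

lemma vert_sum: "p \<in> nil_vertices SS BB \<longleftrightarrow> fst p \<in> nil_vertices s1 b1"
  unfolding nil_vertices_def using nilset_sum by auto

lemma vert_sum_eq: "nil_vertices SS BB = nil_vertices s1 b1 \<times> UNIV"
  using vert_sum by (auto simp: mem_Times_iff)

lemma edge_sum: "(p,q) \<in> nil_edges SS BB \<longleftrightarrow> fst p \<in> nil_vertices s1 b1 \<and> fst q \<in> nil_vertices s1 b1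
   \<and> p \<noteq> q \<and> nilpotent_sub s1 b1 (gen2 s1 b1 (fst p) (fst q))"
  using key[OF l1 l2 n2, of "fst p" "snd p" "fst q" "snd q"] vert_sum
  unfolding nil_edges_def by simp

lemma lift: "(a,c) \<in> (nil_edges s1 b1)\<^sup>* \<Longrightarrow> ((a,u),(c,u)) \<in> (nil_edges SS BB)\<^sup>*"
proof (induction rule: rtrancl_induct)
  case base then show ?case by simp
next
  case (step c d)
  then have "((c,u),(d,u)) \<in> nil_edges SS BB"
    using edge_sum unfolding nil_edges_def by auto
  then show ?case using step by (meson rtrancl.rtrancl_into_rtrancl)
qed

lemma V1_closed: "(a,c) \<in> (nil_edges s1 b1)\<^sup>* \<Longrightarrow> a \<in> nil_vertices s1 b1 \<Longrightarrow> c \<in> nil_vertices s1 b1"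
  by (induction rule: rtrancl_induct) (simp_all add: nil_edges_def)

lemma vertical: "a \<in> nil_vertices s1 b1 \<Longrightarrow> ((a,u),(a,v)) \<in> (nil_edges SS BB)\<^sup>*"
proof (cases "u = v")
  case False
  assume a: "a \<in> nil_vertices s1 b1"
  have "((a,u),(a,v)) \<in> nil_edges SS BB"
    using edge_sum a False nilp_gen_same[OF l1] by auto
  then show ?thesis by blast
qed simp

lemma proj: "(p,q) \<in> (nil_edges SS BB)\<^sup>* \<Longrightarrow> (fst p, fst q) \<in> (nil_edges s1 b1)\<^sup>*"
proof (induction rule: rtrancl_induct)
  case base then show ?case by simp
next
  case (step q r)
  then show ?case
  proof (cases "fst q = fst r")
    case False
    then have "(fst q, fst r) \<in> nil_edges s1 b1" using step(2) edge_sum[of q r]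
      unfolding nil_edges_def by auto
    then show ?thesis using step by (meson rtrancl.rtrancl_into_rtrancl)
  qed simp
qed

lemma reach: assumes "p \<in> nil_vertices SS BB"
  shows "(p,q) \<in> (nil_edges SS BB)\<^sup>* \<longleftrightarrow> (fst p, fst q) \<in> (nil_edges s1 b1)\<^sup>*"
proof
  assume "(fst p, fst q) \<in> (nil_edges s1 b1)\<^sup>*"
  then have "((fst p, snd p), (fst q, snd p)) \<in> (nil_edges SS BB)\<^sup>*" by (rule lift)
  moreover have "fst q \<in> nil_vertices s1 b1"
    using V1_closed \<open>(fst p, fst q) \<in> _\<close> assms vert_sum by blast
  then have "((fst q, snd p), (fst q, snd q)) \<in> (nil_edges SS BB)\<^sup>*" by (rule vertical)
  ultimately show "(p,q) \<in> (nil_edges SS BB)\<^sup>*" by (cases p, cases q) simp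
qed (rule proj)

lemma comp: assumes "p \<in> nil_vertices SS BB"
  shows "(nil_edges SS BB)\<^sup>* `` {p} = ((nil_edges s1 b1)\<^sup>* `` {fst p}) \<times> UNIV"
  using reach[OF assms] by auto

lemma comps: "nil_components SS BB = (\<lambda>C. C \<times> UNIV) ` nil_components s1 b1"
proof -
  have "nil_components SS BB = (\<lambda>p. ((nil_edges s1 b1)\<^sup>* `` {fst p}) \<times> UNIV) ` nil_vertices SS BB"
    unfolding nil_components_def using comp by (intro image_cong) auto
  also have "\<dots> = (\<lambda>C. C \<times> UNIV) ` ((\<lambda>x. (nil_edges s1 b1)\<^sup>* `` {x}) ` (fst ` nil_vertices SS BB))"
    by (simp add: image_image)
  also have "fst ` nil_vertices SS BB = nil_vertices s1 b1"
    unfolding vert_sum_eq by simp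
  finally show ?thesis unfolding nil_components_def .
qed

lemma bij_part: "\<exists>f. bij_betw f (nil_components SS BB) (nil_components s1 b1)"
proof -
  have "inj_on (\<lambda>C::'v set. C \<times> (UNIV::'w set)) (nil_components s1 b1)"
    by (auto simp: inj_on_def times_eq_iff)
  then have "bij_betw (\<lambda>C. C \<times> (UNIV::'w set)) (nil_components s1 b1) (nil_components SS BB)"
    unfolding comps by (rule inj_on_imp_bij_betw)
  then show ?thesis using bij_betw_inv_into by blast
qed

lemma conn_part: "nil_graph_connected s1 b1 \<longleftrightarrow> nil_graph_connected SS BB"
  unfolding nil_graph_connected_def
proof -
  have "(\<forall>p\<in>nil_vertices SS BB. \<forall>q\<in>nil_vertices SS BB. (p, q) \<in> (nil_edges SS BB)\<^sup>*)
     \<longleftrightarrow> (\<forall>x\<in>nil_vertices s1 b1. \<forall>y\<in>nil_vertices s1 b1. (x, y) \<in> (nil_edges s1 b1)\<^sup>*)"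
  proof
    assume H: "\<forall>p\<in>nil_vertices SS BB. \<forall>q\<in>nil_vertices SS BB. (p, q) \<in> (nil_edges SS BB)\<^sup>*"
    show "\<forall>x\<in>nil_vertices s1 b1. \<forall>y\<in>nil_vertices s1 b1. (x, y) \<in> (nil_edges s1 b1)\<^sup>*"
    proof (intro ballI)
      fix x y assume x: "x \<in> nil_vertices s1 b1" and y: "y \<in> nil_vertices s1 b1"
      obtain w :: 'w where True by blast
      have px: "(x,w) \<in> nil_vertices SS BB" "(y,w) \<in> nil_vertices SS BB" using x y vert_sum by auto
      then have "((x,w),(y,w)) \<in> (nil_edges SS BB)\<^sup>*" using H by blast
      then show "(x, y) \<in> (nil_edges s1 b1)\<^sup>*" using reach[OF px(1)] by simp
    qed
  next
    assume H: "\<forall>x\<in>nil_vertices s1 b1. \<forall>y\<in>nil_vertices s1 b1. (x, y) \<in> (nil_edges s1 b1)\<^sup>*"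
    show "\<forall>p\<in>nil_vertices SS BB. \<forall>q\<in>nil_vertices SS BB. (p, q) \<in> (nil_edges SS BB)\<^sup>*"
    proof (intro ballI)
      fix p q assume p: "p \<in> nil_vertices SS BB" and q: "q \<in> nil_vertices SS BB"
      then have "(fst p, fst q) \<in> (nil_edges s1 b1)\<^sup>*" using H vert_sum by blast
      then show "(p, q) \<in> (nil_edges SS BB)\<^sup>*" using reach[OF p] by simp
    qed
  qed
  moreover have "nil_vertices SS BB = {} \<longleftrightarrow> nil_vertices s1 b1 = {}"
    unfolding vert_sum_eq by simp
  ultimately show "(nil_vertices s1 b1 \<noteq> {} \<and> (\<forall>x\<in>nil_vertices s1 b1. \<forall>y\<in>nil_vertices s1 b1. (x, y) \<in> (nil_edges s1 b1)\<^sup>*)) =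
    (nil_vertices SS BB \<noteq> {} \<and> (\<forall>x\<in>nil_vertices SS BB. \<forall>y\<in>nil_vertices SS BB. (x, y) \<in> (nil_edges SS BB)\<^sup>*))"
    by blast
qed

end

theorem theorem5p4:
  fixes s1 :: "'k::field \<Rightarrow> 'v::ab_group_add \<Rightarrow> 'v" and b1 :: "'v \<Rightarrow> 'v \<Rightarrow> 'v"
    and s2 :: "'k \<Rightarrow> 'w::ab_group_add \<Rightarrow> 'w" and b2 :: "'w \<Rightarrow> 'w \<Rightarrow> 'w"
  assumes "fin_dim_lie_algebra s1 b1" and "\<not> nilpotent_lie s1 b1"
    and "fin_dim_lie_algebra s2 b2" and "nilpotent_lie s2 b2"
  shows "(\<exists>f. bij_betw f (nil_components (sum_scale s1 s2) (sum_bracket b1 b2))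
                         (nil_components s1 b1))
    \<and> (nil_graph_connected s1 b1
         \<longleftrightarrow> nil_graph_connected (sum_scale s1 s2) (sum_bracket b1 b2))"
proof -
  have l1: "lie_algebra s1 b1" and l2: "lie_algebra s2 b2"
    using assms(1,3) by (auto simp: fin_dim_lie_algebra_def)
  show ?thesis using bij_part[OF l1 l2 assms(4)] conn_part[OF l1 l2 assms(4)] by blast
qed

end
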